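(* Let $S=\{2N+\frac{2k+1}{3^n} : N,k\in\mathbb{Z},\ n\in\mathbb{N},\ |2k+1|<3^n\}$. Let $G$ be the graph with vertex set $\mathbb{R}$ in which two vertices $a,b\in\mathbb{R}$ are adjacent if and only if $|a-b|\in S$. Then $G$ contains no cycle of odd length; that is, $G$ is bipartite.
   Context: $\mathbb{N}=\{1,2,3,\dots\}$. A cycle of length $m$ in $G$ is a sequence of $m$ distinct vertices $v_1,\dots,v_m$ with $v_i$ adjacent to $v_{i+1}$ for $1\le i<m$ and $v_m$ adjacent to $v_1$. *)

theory Defs
  imports Main Complex_Main
begin

definition S_set :: "real set" where
  "S_set = {2 * of_int N + of_int (2*k+1) / 3 ^ n | N k n.
              n \<ge> 1 \<and> \<bar>2*k+1\<bar> < (3::int) ^ n}"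

definition adj :: "real \<Rightarrow> real \<Rightarrow> bool" where
  "adj a b \<longleftrightarrow> \<bar>a - b\<bar> \<in> S_set"

definition is_cycle :: "(real \<Rightarrow> real \<Rightarrow> bool) \<Rightarrow> nat \<Rightarrow> (nat \<Rightarrow> real) \<Rightarrow> bool" where
  "is_cycle E m v \<longleftrightarrow> m \<ge> 1 \<and> inj_on v {..<m} \<and>
     (\<forall>i. i + 1 < m \<longrightarrow> E (v i) (v (i+1))) \<and> E (v (m-1)) (v 0)"

end

theory Submission
  imports Defs
begin

definition tri :: "real \<Rightarrow> bool" where
  "tri x \<longleftrightarrow> (\<exists>p::int. \<exists>n::nat. x = of_int p / 3 ^ n)"

definition oddtri :: "real \<Rightarrow> bool" where
  "oddtri x \<longleftrightarrow> (\<exists>p::int. \<exists>n::nat. x = of_int p / 3 ^ n \<and> odd p)"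

definition rep :: "real \<Rightarrow> real" where
  "rep x = (SOME z. z \<in> {y. tri (x - y)})"

definition col :: "real \<Rightarrow> bool" where
  "col x = oddtri (x - rep x)"

lemma diff_frac:
  "(of_int p / 3 ^ i :: real) - of_int q / 3 ^ n = of_int (p * 3 ^ n - q * 3 ^ i) / 3 ^ (i + n)"
  by (simp add: field_simps power_add)

lemma oddtri_iff:
  assumes "x = of_int p / 3 ^ n"
  shows "oddtri x \<longleftrightarrow> odd p"
proof
  assume "oddtri x"
  then obtain q m where q: "x = of_int q / 3 ^ m" "odd q" unfolding oddtri_def by auto
  have "(of_int p :: real) * 3 ^ m = of_int q * 3 ^ n"
    using assms q by (simp add: field_simps)
  hence "p * 3 ^ m = q * 3 ^ n" by (metis of_int_eq_iff of_int_mult of_int_numeral of_int_power)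
  moreover have "odd (q * 3 ^ n)" using q by simp
  ultimately have "odd (p * 3 ^ m)" by simp
  thus "odd p" by simp
next
  assume "odd p" thus "oddtri x" using assms unfolding oddtri_def by auto
qed

lemma tri_diff: "tri x \<Longrightarrow> tri y \<Longrightarrow> tri (x - y)"
  unfolding tri_def using diff_frac by metis

lemma tri_neg: "tri x \<Longrightarrow> tri (- x)"
  using tri_diff[of 0 x] unfolding tri_def by force

lemma flip:
  assumes "a - b = of_int q / 3 ^ n" "odd q"
  shows "col a \<noteq> col b"
proof -
  have tab: "tri (a - b)" using assms unfolding tri_def by auto
  have eq: "{y. tri (a - y)} = {y. tri (b - y)}"
  proof (intro set_eqI iffI; simp)
    fix y assume "tri (a - y)"
    from tri_diff[OF this tab] show "tri (b - y)" by simp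
  next
    fix y assume "tri (b - y)"
    from tri_diff[OF this tri_neg[OF tab]] show "tri (a - y)" by simp
  qed
  have "a \<in> {y. tri (a - y)}" unfolding tri_def by (auto intro!: exI[of _ 0])
  hence "rep a \<in> {y. tri (a - y)}" unfolding rep_def by (rule someI)
  then obtain p i where p: "a - rep a = of_int p / 3 ^ i" unfolding tri_def by auto
  have rb: "rep b = rep a" unfolding rep_def using eq by simp
  have "b - rep b = (a - rep a) - (a - b)" using rb by simp
  also have "\<dots> = of_int (p * 3 ^ n - q * 3 ^ i) / 3 ^ (i + n)"
    using p assms(1) diff_frac by simp
  finally have b: "b - rep b = of_int (p * 3 ^ n - q * 3 ^ i) / 3 ^ (i + n)" .
  have "col a \<longleftrightarrow> odd p" unfolding col_def using oddtri_iff[OF p] .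
  moreover have "col b \<longleftrightarrow> odd (p * 3 ^ n - q * 3 ^ i)" unfolding col_def using oddtri_iff[OF b] .
  moreover have "odd (p * 3 ^ n - q * 3 ^ i) \<longleftrightarrow> \<not> odd p" using assms(2) by simp
  ultimately show ?thesis by simp
qed

lemma adj_flip:
  assumes "adj a b" shows "col a \<noteq> col b"
proof -
  obtain N k n where s: "\<bar>a - b\<bar> = 2 * of_int N + of_int (2*k+1) / 3 ^ n"
    using assms unfolding adj_def S_set_def by auto
  have e: "(2 * of_int N + of_int (2*k+1) / 3 ^ n :: real) = of_int (2*N*3^n + 2*k+1) / 3 ^ n"
    by (simp add: field_simps)
  show ?thesis
  proof (cases "a - b \<ge> 0")
    case True
    hence "a - b = of_int (2*N*3^n + 2*k+1) / 3 ^ n" using s e by simp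
    thus ?thesis by (rule flip) simp
  next
    case False
    hence "a - b = - (of_int (2*N*3^n + 2*k+1) / 3 ^ n)" using s e by simp
    hence "a - b = of_int (- (2*N*3^n + 2*k+1)) / 3 ^ n" by (simp only: of_int_minus minus_divide_left)
    thus ?thesis by (rule flip) simp
  qed
qed

theorem mainTheorem2:
  fixes m :: nat and v :: "nat \<Rightarrow> real"
  assumes "odd m"
  shows "\<not> is_cycle adj m v"
proof
  assume c: "is_cycle adj m v"
  have step: "\<And>i. i + 1 < m \<Longrightarrow> adj (v i) (v (i+1))" using c unfolding is_cycle_def by auto
  have ind: "i < m \<Longrightarrow> (col (v i) \<longleftrightarrow> (col (v 0) \<noteq> odd i))" for i
  proof (induction i)
    case 0 thus ?case by simp
  next
    case (Suc i)
    have "col (v i) \<noteq> col (v (i+1))" using adj_flip step Suc.prems by simp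
    thus ?case using Suc by auto
  qed
  have "adj (v (m-1)) (v 0)" using c unfolding is_cycle_def by auto
  hence "col (v (m-1)) \<noteq> col (v 0)" by (rule adj_flip)
  moreover have "m \<ge> 1" using c unfolding is_cycle_def by auto
  moreover have "even (m - 1)" using assms \<open>m \<ge> 1\<close> by simp
  ultimately show False using ind[of "m-1"] by simp
qed

end
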